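(* Let $a$ be a strongly regular scale factor and fix $\tau>0$. For $0<\rho<\rho_{\mathcal M_\tau}$ let $t_0=t_0(\tau,\rho)\in(0,\tau)$ be defined by $\rho=\int_{t_0}^{\tau}\frac{a(t)}{\sqrt{a^2(\tau)-a^2(t)}}dt$, and let \[ g_{\tau\tau}(\tau,\rho)=-\left[1-\dot a(\tau)\int_{t_0}^{\tau}\frac{\ddot a(t)}{\dot a(t)^2}\left(\frac{\sqrt{a^2(\tau)-a^2(t_0)}}{\sqrt{a^2(\tau)-a^2(t)}}-1\right)dt\right]^2 . \] Then \[ \lim_{\rho\to\rho_{\mathcal M_\tau}^-}g_{\tau\tau}(\tau,\rho)=-\left[1-\dot a(\tau)\int_{0}^{\tau}\frac{\ddot a(t)}{\dot a(t)^2}\left(\frac{a(\tau)}{\sqrt{a^2(\tau)-a^2(t)}}-1\right)dt\right]^2, \] and the value $g_{\tau\tau}(\tau,\rho_{\mathcal M_\tau})$ defined by this limit satisfies $\infty>-g_{\tau\tau}(\tau,\rho_{\mathcal M_\tau})>0$.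
   Context: A function $a:[0,\infty)\to[0,\infty)$ is a regular scale factor if: (a) $a(0)=0$; (b) $a$ is increasing and continuous on $[0,\infty)$ and twice continuously differentiable on $(0,\infty)$, with an inverse function on $[0,\infty)$; (c) for all $t>0$, $\frac{a(t)\ddot a(t)}{\dot a(t)^2}\le 1$ (the quotient presupposes $\dot a(t)\neq0$ for $t>0$). It is strongly regular if, in addition, there is a constant $K\ge 1$ with $\frac{a(t)\ddot a(t)}{\dot a(t)^2}\ge -K$ for all $t>0$. For $\tau>0$, $\rho_{\mathcal M_\tau}=\int_0^\tau \frac{a(t)}{\sqrt{a^2(\tau)-a^2(t)}}dt$ (the Fermi radius at proper time $\tau$). The function $g_{\tau\tau}$ is the $d\tau^2$ coefficient of the Robertson–Walker metric $-dt^2+a^2(t)[d\chi^2+\dots]$ written in Fermi coordinates $(\tau,\rho,\dots)$ of the comoving observer at $\chi=0$; $\rho\to\rho_{\mathcal M_\tau}^-$ corresponds to $t_0\to0^+$. *)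

theory Defs
  imports "HOL-Analysis.Analysis"
begin

definition regular_scale_factor ::
  "(real \<Rightarrow> real) \<Rightarrow> (real \<Rightarrow> real) \<Rightarrow> (real \<Rightarrow> real) \<Rightarrow> bool" where
  "regular_scale_factor a a' a'' \<longleftrightarrow>
     a 0 = 0 \<and>
     (\<forall>t\<ge>0. a t \<ge> 0) \<and>
     strict_mono_on {0..} a \<and>
     continuous_on {0..} a \<and>
     (\<forall>t>0. (a has_real_derivative a' t) (at t)) \<and>
     (\<forall>t>0. (a' has_real_derivative a'' t) (at t)) \<and>
     continuous_on {0<..} a'' \<and>
     (\<forall>t>0. a' t \<noteq> 0) \<and>
     (\<forall>t>0. a t * a'' t / (a' t)\<^sup>2 \<le> 1)"

definition strongly_regular_scale_factor ::
  "(real \<Rightarrow> real) \<Rightarrow> (real \<Rightarrow> real) \<Rightarrow> (real \<Rightarrow> real) \<Rightarrow> bool" where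
  "strongly_regular_scale_factor a a' a'' \<longleftrightarrow>
     regular_scale_factor a a' a'' \<and>
     (\<exists>K\<ge>1. \<forall>t>0. a t * a'' t / (a' t)\<^sup>2 \<ge> - K)"

definition fermi_radius :: "(real \<Rightarrow> real) \<Rightarrow> real \<Rightarrow> real" where
  "fermi_radius a \<tau> = integral {0..\<tau>} (\<lambda>t. a t / sqrt ((a \<tau>)\<^sup>2 - (a t)\<^sup>2))"

definition fermi_t0 :: "(real \<Rightarrow> real) \<Rightarrow> real \<Rightarrow> real \<Rightarrow> real" where
  "fermi_t0 a \<tau> \<rho> = (THE t0. 0 < t0 \<and> t0 < \<tau> \<and>
       \<rho> = integral {t0..\<tau>} (\<lambda>t. a t / sqrt ((a \<tau>)\<^sup>2 - (a t)\<^sup>2)))"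

definition g_tautau ::
  "(real \<Rightarrow> real) \<Rightarrow> (real \<Rightarrow> real) \<Rightarrow> (real \<Rightarrow> real) \<Rightarrow> real \<Rightarrow> real \<Rightarrow> real" where
  "g_tautau a a' a'' \<tau> \<rho> =
     (let t0 = fermi_t0 a \<tau> \<rho> in
      - (1 - a' \<tau> * integral {t0..\<tau>}
           (\<lambda>t. a'' t / (a' t)\<^sup>2 *
                 (sqrt ((a \<tau>)\<^sup>2 - (a t0)\<^sup>2) / sqrt ((a \<tau>)\<^sup>2 - (a t)\<^sup>2) - 1)))\<^sup>2)"

end

theory Submission
  imports Defs
begin


locale SF =
  fixes a a' a'' :: "real \<Rightarrow> real" and \<tau> :: real
  assumes reg: "regular_scale_factor a a' a''" and tau: "\<tau> > 0"
begin

lemma a0: "a 0 = 0" using reg by (simp add: regular_scale_factor_def)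
lemma amono: "0 \<le> x \<Longrightarrow> x < y \<Longrightarrow> a x < a y"
  using reg unfolding regular_scale_factor_def strict_mono_on_def by auto
lemma apos: "t > 0 \<Longrightarrow> a t > 0" using amono[of 0 t] a0 by simp
lemma anonneg: "t \<ge> 0 \<Longrightarrow> a t \<ge> 0" using reg by (simp add: regular_scale_factor_def)
lemma amono_le: "0 \<le> x \<Longrightarrow> x \<le> y \<Longrightarrow> a x \<le> a y"
  using amono[of x y] by (cases "x = y") auto
lemma da: "t > 0 \<Longrightarrow> (a has_real_derivative a' t) (at t)"
  using reg by (simp add: regular_scale_factor_def)
lemma dda: "t > 0 \<Longrightarrow> (a' has_real_derivative a'' t) (at t)"
  using reg by (simp add: regular_scale_factor_def)
lemma cont_a: "continuous_on {0..} a" using reg by (simp add: regular_scale_factor_def)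
lemma isCont_a: "t > 0 \<Longrightarrow> isCont a t" using da DERIV_isCont by blast
lemma isCont_a': "t > 0 \<Longrightarrow> isCont a' t" using dda DERIV_isCont by blast
lemma isCont_a'': "t > 0 \<Longrightarrow> isCont a'' t"
proof -
  assume t: "t > 0"
  have "continuous_on {0<..} a''" using reg by (simp add: regular_scale_factor_def)
  then show ?thesis using t by (simp add: continuous_on_eq_continuous_at)
qed
lemma ratio_le: "t > 0 \<Longrightarrow> a t * a'' t / (a' t)\<^sup>2 \<le> 1"
  using reg unfolding regular_scale_factor_def by blast
lemma a'ne: "t > 0 \<Longrightarrow> a' t \<noteq> 0"
  using reg by (simp add: regular_scale_factor_def)
lemma a'pos: "t > 0 \<Longrightarrow> a' t > 0"
proof (rule ccontr)
  assume t: "t > 0" and "\<not> a' t > 0"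
  then have "a' t < 0" using a'ne[OF t] by linarith
  from DERIV_neg_dec_right[OF da[OF t] this] obtain d where d: "d > 0"
    and h: "\<And>h. h > 0 \<Longrightarrow> h < d \<Longrightarrow> a (t + h) < a t" by blast
  have "a (t + d/2) < a t" using h[of "d/2"] d by simp
  moreover have "a t < a (t + d/2)" using amono[of t "t + d/2"] t d by simp
  ultimately show False by simp
qed
lemma ratio_le': "t > 0 \<Longrightarrow> a t * a'' t \<le> (a' t)\<^sup>2"
  using ratio_le[of t] a'pos[of t] by (simp add: divide_le_eq)

lemma q_mono:
  assumes x: "0 < x" and xy: "x \<le> y"
  shows "a x / a' x \<le> a y / a' y"
proof (rule DERIV_nonneg_imp_increasing_open[OF xy])
  fix z assume z: "x < z" "z < y"
  then have z0: "z > 0" using x by simp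
  have "((\<lambda>t. a t / a' t) has_real_derivative
         (a' z * a' z - a z * a'' z) / (a' z * a' z)) (at z)"
    using DERIV_divide[OF da[OF z0] dda[OF z0]] a'ne[OF z0] by simp
  moreover have "0 \<le> (a' z * a' z - a z * a'' z) / (a' z * a' z)"
    using ratio_le'[OF z0] by (simp add: power2_eq_square)
  ultimately show "\<exists>y. ((\<lambda>t. a t / a' t) has_real_derivative y) (at z) \<and> 0 \<le> y" by blast
next
  show "continuous_on {x..y} (\<lambda>t. a t / a' t)"
    using x a'ne isCont_a isCont_a'
    by (intro continuous_at_imp_continuous_on ballI continuous_intros) auto
qed

end


lemma alg1:
  fixes S A x d :: real
  assumes "S > 0" "A + S \<noteq> 0" "x*x = A*A - S*S"
  shows "(d*(A+S) - x*(0 + -(x*d)/S))/((A+S)*(A+S)) = A*d/(S*(A+S))"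
proof -
  have 1: "d*(A+S) - x*(0 + -(x*d)/S) = d*(A*S + S*S + x*x)/S" using assms(1) by (simp add: field_simps)
  have "A*S + S*S + x*x = A*(A+S)" using assms(3) by algebra
  then show ?thesis unfolding 1 using assms(1,2) by (simp add: divide_simps)
qed

context SF begin

abbreviation "A \<equiv> a \<tau>"
abbreviation "s t \<equiv> sqrt ((a \<tau>)\<^sup>2 - (a t)\<^sup>2)"
definition "\<psi> t = A * a' t / (s t * (A + s t))"

lemma Apos: "A > 0" using apos tau by simp
lemma a_lt_A: "0 \<le> t \<Longrightarrow> t < \<tau> \<Longrightarrow> a t < A" using amono by simp
lemma s_pos: "0 \<le> t \<Longrightarrow> t < \<tau> \<Longrightarrow> s t > 0"
proof -
  assume t: "0 \<le> t" "t < \<tau>"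
  have "a t < A" "0 \<le> a t" using a_lt_A[OF t] anonneg t by auto
  then have "(a t)\<^sup>2 < A\<^sup>2" by (simp add: power_strict_mono)
  then show ?thesis by simp
qed
lemma s_sq: "0 \<le> t \<Longrightarrow> t \<le> \<tau> \<Longrightarrow> (s t)\<^sup>2 = A\<^sup>2 - (a t)\<^sup>2"
proof -
  assume t: "0 \<le> t" "t \<le> \<tau>"
  have "a t \<le> A" "0 \<le> a t" using amono_le t anonneg by auto
  then have "(a t)\<^sup>2 \<le> A\<^sup>2" by (simp add: power_mono)
  then show ?thesis by simp
qed
lemma s_nonneg: "0 \<le> t \<Longrightarrow> t \<le> \<tau> \<Longrightarrow> s t \<ge> 0"
proof -
  assume t: "0 \<le> t" "t \<le> \<tau>"
  have "a t \<le> A" "0 \<le> a t" using amono_le t anonneg by auto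
  then have "(a t)\<^sup>2 \<le> A\<^sup>2" by (simp add: power_mono)
  then show ?thesis by simp
qed
lemma s_tau: "s \<tau> = 0" by simp
lemma s0: "s 0 = A" using a0 Apos by simp
lemma s_anti: "0 \<le> x \<Longrightarrow> x \<le> y \<Longrightarrow> s y \<le> s x"
  using amono_le[of x y] anonneg[of x] by (intro real_sqrt_le_mono) (simp add: power_mono)
lemma s_le_A: "0 \<le> t \<Longrightarrow> s t \<le> A" using s_anti[of 0 t] s0 by simp
lemma cont_s: "continuous_on {0..} s"
  using cont_a by (intro continuous_intros)
lemma isCont_s: "t > 0 \<Longrightarrow> isCont s t"
  using isCont_a by (intro continuous_intros) auto

lemma ds:
  assumes t: "0 < t" "t < \<tau>"
  shows "(s has_real_derivative (- (a t * a' t) / s t)) (at t)"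
proof -
  have sp: "s t > 0" using s_pos t by simp
  have "(s has_real_derivative (inverse (sqrt (A\<^sup>2 - (a t)\<^sup>2)) / 2) * (0 - 2 * a t * a' t)) (at t)"
    apply (rule DERIV_chain2[where f=sqrt])
     apply (rule DERIV_real_sqrt)
    using sp apply simp
    using da[OF t(1)] by (auto intro!: derivative_eq_intros)
  then show ?thesis using sp by (simp add: field_simps)
qed

lemma q_le: "0 < t \<Longrightarrow> t \<le> \<tau> \<Longrightarrow> a t \<le> (A / a' \<tau>) * a' t"
proof -
  assume t: "0 < t" "t \<le> \<tau>"
  have "a t / a' t \<le> A / a' \<tau>" using q_mono[OF t] .
  then show ?thesis using a'pos[OF t(1)] by (simp add: divide_le_eq mult.commute)
qed

lemma psi_integral: "(\<psi> has_integral 1) {0..\<tau>}"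
proof -
  let ?P = "\<lambda>t. a t / (A + s t)"
  have "(\<psi> has_integral ?P \<tau> - ?P 0) {0..\<tau>}"
  proof (rule fundamental_theorem_of_calculus_interior)
    show "0 \<le> \<tau>" using tau by simp
    have "continuous_on {0..\<tau>} a" using cont_a by (rule continuous_on_subset) auto
    moreover have "continuous_on {0..\<tau>} s" using cont_s by (rule continuous_on_subset) auto
    moreover have "\<forall>t\<in>{0..\<tau>}. A + s t \<noteq> 0" using Apos s_nonneg by (smt (verit) atLeastAtMost_iff)
    ultimately show "continuous_on {0..\<tau>} ?P" by (intro continuous_intros) auto
  next
    fix t assume "t \<in> {0<..<\<tau>}"
    then have t: "0 < t" "t < \<tau>" by auto
    have sp: "s t > 0" using s_pos t by simp
    have ss: "(s t)\<^sup>2 = A\<^sup>2 - (a t)\<^sup>2" using s_sq t by simp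
    have ne: "A + s t \<noteq> 0" using Apos sp by linarith
    have d: "(?P has_real_derivative
        (a' t * (A + s t) - a t * (0 + - (a t * a' t) / s t)) / ((A + s t) * (A + s t))) (at t)"
      using Apos sp ne by (intro DERIV_divide DERIV_add da ds t DERIV_const) auto
    have "(a' t * (A + s t) - a t * (0 + - (a t * a' t) / s t)) / ((A + s t) * (A + s t)) = \<psi> t"
      unfolding \<psi>_def
      by (rule alg1) (use sp ne ss in \<open>auto simp: power2_eq_square\<close>)
    then show "(?P has_vector_derivative \<psi> t) (at t)"
      using d by (simp add: has_real_derivative_iff_has_vector_derivative[symmetric])
  qed
  moreover have "?P \<tau> - ?P 0 = 1" using Apos a0 by simp
  ultimately show ?thesis by simp
qed

lemma psi_nonneg: "0 < t \<Longrightarrow> t < \<tau> \<Longrightarrow> \<psi> t \<ge> 0"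
  unfolding \<psi>_def using Apos a'pos[of t] s_pos[of t]
  by (intro divide_nonneg_pos mult_nonneg_nonneg mult_pos_pos add_pos_pos) auto

lemma psi_int_open: "\<psi> integrable_on {0<..<\<tau>}"
  using psi_integral integrable_on_open_interval_real by blast

lemma psi_integral_open: "integral {0<..<\<tau>} \<psi> = 1"
  using psi_integral integral_open_interval_real integral_unique by metis

end



lemma integrable_by_bound:
  fixes g h :: "real \<Rightarrow> real"
  assumes "continuous_on {c<..<d} g" "h integrable_on {c<..<d}" "\<And>x. x \<in> {c<..<d} \<Longrightarrow> \<bar>g x\<bar> \<le> h x"
  shows "g integrable_on {c<..<d}"
  by (rule measurable_bounded_by_integrable_imp_integrable_real[OF
        continuous_imp_measurable_on_sets_lebesgue[OF assms(1)] assms(2,3)]) auto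

lemma integral_pos_point:
  fixes f :: "real \<Rightarrow> real"
  assumes int: "f integrable_on {c<..<d}" and cont: "continuous_on {c<..<d} f"
    and nn: "\<And>x. x \<in> {c<..<d} \<Longrightarrow> f x \<ge> 0"
    and x0: "x0 \<in> {c<..<d}" and pos: "f x0 > 0"
  shows "integral {c<..<d} f > 0"
proof -
  have "isCont f x0" using cont x0 by (simp add: continuous_on_eq_continuous_at)
  then have "(f \<longlongrightarrow> f x0) (at x0)" by (simp add: isCont_def)
  from order_tendstoD(1)[OF this pos] have "\<forall>\<^sub>F y in at x0. f y > 0" .
  then obtain \<delta> where \<delta>: "\<delta> > 0" and hd: "\<And>y. y \<noteq> x0 \<Longrightarrow> dist y x0 < \<delta> \<Longrightarrow> f y > 0"
    unfolding eventually_at by blast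
  define e where "e = min (\<delta>/2) (min ((x0 - c)/2) ((d - x0)/2))"
  have "e \<le> (x0-c)/2" "e \<le> (d-x0)/2" "e \<le> \<delta>/2" "e > 0" using \<delta> x0 by (auto simp: e_def min_def)
  then have e: "e > 0" "e < \<delta>" "x0 - e > c" "x0 + e < d" using \<delta> x0 by auto
  have sub: "{x0-e..x0+e} \<subseteq> {c<..<d}" using e by auto
  have "integral {x0-e..x0+e} (\<lambda>_. 0::real) < integral {x0-e..x0+e} f"
  proof (rule integral_less_real)
    show "continuous_on {x0-e..x0+e} f" using cont sub by (rule continuous_on_subset)
    show "{x0-e<..<x0+e} \<noteq> {}" using e by auto
    fix x assume x: "x \<in> {x0-e<..<x0+e}"
    show "0 < f x"
    proof (cases "x = x0")
      case True then show ?thesis using pos by simp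
    next
      case False then show ?thesis using x e by (intro hd) (auto simp: dist_real_def)
    qed
  qed auto
  also have "\<dots> \<le> integral {c<..<d} f"
  proof (rule integral_subset_le[OF sub _ int])
    have "f integrable_on {c..d}" using int integrable_on_open_interval_real by blast
    then show "f integrable_on {x0-e..x0+e}" by (rule integrable_subinterval_real) (use sub e in auto)
  qed (use nn in auto)
  finally show ?thesis by simp
qed

lemma alg2:
  fixes A p q x d S :: real
  assumes "A > 0" "p > 0" "d > 0" "S > 0" "S \<le> A" "0 \<le> x" "x \<le> (A/p) * d"
  shows "x / S \<le> (2*A/p) * (A * d / (S * (A + S)))"
proof -
  have "x / S \<le> (A/p) * d / S" using divide_right_mono[OF assms(7), of S] assms by simp
  also have "\<dots> \<le> (A/p) * d * (2*A / (S*(A+S)))"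
  proof -
    have w: "0 < S*(A+S)" using assms by simp
    have "S*(A+S) \<le> 2*A*S" using mult_left_mono[OF assms(5), of S] assms by (simp add: algebra_simps)
    then have "2*A/(2*A*S) \<le> 2*A/(S*(A+S))" using assms w by (intro frac_le) auto
    then have "1 / S \<le> 2*A/(S*(A+S))" using assms by simp
    moreover have "(A/p)*d \<ge> 0" using assms by simp
    ultimately have "(A/p)*d*(1/S) \<le> (A/p)*d*(2*A/(S*(A+S)))" by (rule mult_left_mono)
    then show ?thesis by simp
  qed
  also have "\<dots> = (2*A/p) * (A * d / (S * (A + S)))" by simp
  finally show ?thesis .
qed

context SF begin

definition "f0 t = a t / s t"
definition "R t0 = integral {t0..\<tau>} f0"
lemma f0_eq: "f0 = (\<lambda>t. a t / s t)" by (rule ext) (simp add: f0_def)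

lemma psi_eq: "\<psi> t = A * a' t / (s t * (A + s t))" by (simp add: \<psi>_def)

lemma cont_f0: "continuous_on {0<..<\<tau>} f0"
proof (intro continuous_at_imp_continuous_on ballI)
  fix t assume "t \<in> {0<..<\<tau>}"
  then have t: "0 < t" "t < \<tau>" by auto
  have "s t \<noteq> 0" using s_pos[of t] t by linarith
  then show "isCont f0 t" unfolding f0_def
    by (intro continuous_intros isCont_a isCont_s t)
qed

lemma f0_bound: "t \<in> {0<..<\<tau>} \<Longrightarrow> \<bar>f0 t\<bar> \<le> (2*A/a' \<tau>) * \<psi> t"
proof -
  assume "t \<in> {0<..<\<tau>}"
  then have t: "0 < t" "t < \<tau>" by auto
  have "f0 t \<ge> 0" unfolding f0_def using apos[of t] s_pos[of t] t by simp
  moreover have "f0 t \<le> (2*A/a' \<tau>) * \<psi> t" unfolding f0_def psi_eq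
    by (rule alg2) (use Apos a'pos tau t s_pos s_le_A q_le anonneg in auto)
  ultimately show ?thesis by simp
qed

lemma f0_int_open: "f0 integrable_on {0<..<\<tau>}"
proof -
  have "(\<lambda>t. (2*A/a' \<tau>) * \<psi> t) integrable_on {0<..<\<tau>}"
    using integrable_cmul[OF psi_int_open, of "2*A/a' \<tau>"] by simp
  then show ?thesis by (rule integrable_by_bound[OF cont_f0 _ f0_bound])
qed

lemma f0_int: "f0 integrable_on {0..\<tau>}"
  using f0_int_open integrable_on_open_interval_real by blast

lemma R_cont: "continuous_on {0..\<tau>} R"
  unfolding R_def by (rule indefinite_integral_continuous_1'[OF f0_int])

lemma R_tau: "R \<tau> = 0" unfolding R_def by simp
lemma R_0: "R 0 = fermi_radius a \<tau>" unfolding R_def fermi_radius_def f0_def by simp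

lemma R_strict: assumes "0 \<le> x" "x < y" "y \<le> \<tau>" shows "R y < R x"
proof -
  have iy: "f0 integrable_on {x..\<tau>}" using f0_int by (rule integrable_subinterval_real) (use assms in auto)
  have "R x = integral {x..y} f0 + R y" unfolding R_def
    using Henstock_Kurzweil_Integration.integral_combine[OF _ _ iy, of y] assms by simp
  moreover have "integral {x<..<y} f0 > 0"
  proof (rule integral_pos_point)
    have "f0 integrable_on {x..y}" using f0_int by (rule integrable_subinterval_real) (use assms in auto)
    then show "f0 integrable_on {x<..<y}" using integrable_on_open_interval_real by blast
    show "continuous_on {x<..<y} f0" using cont_f0 by (rule continuous_on_subset) (use assms in auto)
    show "(x+y)/2 \<in> {x<..<y}" using assms by auto
    show "f0 ((x+y)/2) > 0" unfolding f0_def using apos s_pos assms by simp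
    fix z assume "z \<in> {x<..<y}" then show "f0 z \<ge> 0" unfolding f0_def using apos s_pos assms
      by (simp add: less_imp_le)
  qed
  ultimately show ?thesis using integral_open_interval_real[of x y f0] by simp
qed

lemma R_le: "0 \<le> x \<Longrightarrow> x \<le> y \<Longrightarrow> y \<le> \<tau> \<Longrightarrow> R y \<le> R x"
  using R_strict by (cases "x = y") (auto simp: less_imp_le)

end


context SF begin

lemma R0_pos: "R 0 > 0" using R_strict[of 0 \<tau>] tau R_tau by simp

lemma t0_char:
  assumes "0 < \<rho>" "\<rho> < R 0"
  shows "0 < fermi_t0 a \<tau> \<rho> \<and> fermi_t0 a \<tau> \<rho> < \<tau> \<and> R (fermi_t0 a \<tau> \<rho>) = \<rho>"
proof -
  obtain x where x: "0 \<le> x" "x \<le> \<tau>" "R x = \<rho>"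
    using IVT2'[where f=R and a=0 and b=\<tau> and y=\<rho>, OF _ _ _ R_cont] R_tau assms tau by auto
  have x0: "x \<noteq> 0" using x assms by auto
  have xt: "x \<noteq> \<tau>" using x assms R_tau by auto
  have eq: "fermi_t0 a \<tau> \<rho> = x"
    unfolding fermi_t0_def
  proof (rule the_equality)
    show "0 < x \<and> x < \<tau> \<and> \<rho> = integral {x..\<tau>} (\<lambda>t. a t / sqrt ((a \<tau>)\<^sup>2 - (a t)\<^sup>2))"
      using x x0 xt by (auto simp: R_def f0_eq)
  next
    fix y assume y: "0 < y \<and> y < \<tau> \<and> \<rho> = integral {y..\<tau>} (\<lambda>t. a t / sqrt ((a \<tau>)\<^sup>2 - (a t)\<^sup>2))"
    then have Ry: "R y = \<rho>" by (auto simp: R_def f0_eq)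
    show "y = x"
    proof (rule ccontr)
      assume "y \<noteq> x"
      then consider "y < x" | "x < y" by linarith
      then show False
        using R_strict[of y x] R_strict[of x y] x y Ry by cases auto
    qed
  qed
  show ?thesis using eq x x0 xt by auto
qed

lemma t0_small:
  assumes "0 < \<epsilon>" "\<epsilon> \<le> \<tau>" "R \<epsilon> < \<rho>" "\<rho> < R 0"
  shows "fermi_t0 a \<tau> \<rho> < \<epsilon>"
proof (rule ccontr)
  have rp: "0 < \<rho>" using assms R_le[of \<epsilon> \<tau>] R_tau by auto
  note c = t0_char[OF rp assms(4)]
  assume "\<not> fermi_t0 a \<tau> \<rho> < \<epsilon>"
  then have "R (fermi_t0 a \<tau> \<rho>) \<le> R \<epsilon>" using R_le[of \<epsilon> "fermi_t0 a \<tau> \<rho>"] c assms by auto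
  then show False using c assms by simp
qed

lemma t0_lim: "filterlim (fermi_t0 a \<tau>) (at_right 0) (at_left (R 0))"
  unfolding filterlim_at
proof
  have ev: "\<forall>\<^sub>F \<rho> in at_left (R 0). \<rho> \<in> {0<..<R 0}"
    by (rule eventually_at_left_real[OF R0_pos])
  show "\<forall>\<^sub>F \<rho> in at_left (R 0). fermi_t0 a \<tau> \<rho> \<in> {0<..} \<and> fermi_t0 a \<tau> \<rho> \<noteq> 0"
    using ev proof eventually_elim
    case (elim \<rho>) then show ?case using t0_char[of \<rho>] by auto
  qed
  show "(fermi_t0 a \<tau> \<longlongrightarrow> 0) (at_left (R 0))"
  proof (rule order_tendstoI)
    fix y :: real assume "y < 0"
    show "\<forall>\<^sub>F \<rho> in at_left (R 0). y < fermi_t0 a \<tau> \<rho>"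
      using ev proof eventually_elim
      case (elim \<rho>) then show ?case using t0_char[of \<rho>] \<open>y < 0\<close> by auto
    qed
  next
    fix \<epsilon> :: real assume e: "0 < \<epsilon>"
    define e' where "e' = min \<epsilon> \<tau>"
    have e': "0 < e'" "e' \<le> \<tau>" "e' \<le> \<epsilon>" using e tau by (auto simp: e'_def)
    have "R e' < R 0" using R_strict[of 0 e'] e' by simp
    then have "\<forall>\<^sub>F \<rho> in at_left (R 0). \<rho> \<in> {R e'<..<R 0}"
      by (rule eventually_at_left_real)
    then show "\<forall>\<^sub>F \<rho> in at_left (R 0). fermi_t0 a \<tau> \<rho> < \<epsilon>"
    proof eventually_elim
      case (elim \<rho>) then show ?case using t0_small[of e' \<rho>] e' by auto
    qed
  qed
qed

end



lemma alg3:
  fixes r \<alpha> \<beta> c v A \<sigma> K p d :: real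
  assumes "0 \<le> \<beta>" "\<beta> \<le> \<alpha>" "0 < \<alpha>" "0 < v" "v \<le> A" "0 < \<sigma>" "\<sigma> \<le> c"
    "c * c = A * A - \<beta> * \<beta>" "v * v = A * A - \<alpha> * \<alpha>" "\<bar>r * \<alpha>\<bar> \<le> K" "A > 0" "p > 0" "d > 0"
    "\<alpha> \<le> (A/p)*d"
  shows "\<bar>r * (c/v - 1)\<bar> \<le> (2 * K * A/(\<sigma> * p)) * (A * d/(v * (A+v)))"
proof -
  have c0: "c > 0" using assms by linarith
  have "\<beta> * \<beta> \<le> \<alpha> * \<alpha>" using assms by (intro mult_mono) auto
  then have vc2: "v * v \<le> c * c" using assms by linarith
  have cv: "v \<le> c"
  proof (rule ccontr)
    assume "\<not> v \<le> c" then have "c < v" by simp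
    then have "c * c < v * v" using c0 by (intro mult_strict_mono) auto
    then show False using vc2 by simp
  qed
  have "(c - v)*(c + v) = \<alpha> * \<alpha> - \<beta> * \<beta>" using assms by (simp add: algebra_simps)
  then have diff: "c - v = (\<alpha> * \<alpha> - \<beta> * \<beta>)/(c+v)" using c0 assms by (simp add: field_simps)
  have "(\<alpha> * \<alpha> - \<beta> * \<beta>)/(c+v) \<le> \<alpha> * \<alpha>/\<sigma>"
    using assms by (intro frac_le) auto
  then have cvb: "c - v \<le> \<alpha> * \<alpha>/\<sigma>" using diff by simp
  have q: "c/v - 1 = (c - v)/v" using assms by (simp add: field_simps)
  have q0: "0 \<le> c/v - 1" using q cv assms by simp
  have q1: "c/v - 1 \<le> \<alpha> * \<alpha>/(\<sigma> * v)"
    using q divide_right_mono[OF cvb, of v] assms by simp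
  have "\<bar>r * (c/v - 1)\<bar> = \<bar>r\<bar> * (c/v - 1)" using q0 by (simp add: abs_mult)
  also have "\<dots> \<le> \<bar>r\<bar> * (\<alpha> * \<alpha>/(\<sigma> * v))" using q1 by (intro mult_left_mono) auto
  also have "\<dots> = \<bar>r * \<alpha>\<bar> * (\<alpha>/v) / \<sigma>" using assms by (simp add: abs_mult field_simps)
  also have "\<dots> \<le> K * (\<alpha>/v) / \<sigma>"
    using assms by (intro divide_right_mono mult_right_mono) auto
  also have "\<dots> \<le> K * ((2 * A/p) * (A * d/(v * (A+v)))) / \<sigma>"
  proof -
    have "\<alpha>/v \<le> (2 * A/p) * (A * d/(v * (A+v)))" by (rule alg2) (use assms in auto)
    moreover have "K \<ge> 0" using assms(10) by linarith
    ultimately show ?thesis using assms by (intro divide_right_mono mult_left_mono) auto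
  qed
  also have "\<dots> = (2 * K * A/(\<sigma> * p)) * (A * d/(v * (A+v)))" by (simp add: field_simps)
  finally show ?thesis .
qed

locale SSF = SF +
  fixes K :: real
  assumes K1: "K \<ge> 1" and Kb: "\<And>t. t > 0 \<Longrightarrow> a t * a'' t / (a' t)\<^sup>2 \<ge> -K"
begin

definition "h t0 t = a'' t / (a' t)\<^sup>2 * (s t0 / s t - 1)"
definition "\<sigma> = s (\<tau>/2)"
definition "M = 2*K*A/(\<sigma> * a' \<tau>)"

lemma sigma_pos: "\<sigma> > 0" unfolding \<sigma>_def using s_pos tau by simp

lemma ratio_abs: "t > 0 \<Longrightarrow> \<bar>a'' t / (a' t)\<^sup>2 * a t\<bar> \<le> K"
  using ratio_le[of t] Kb[of t] K1 by (simp add: abs_le_iff mult.commute)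

lemma h_bound:
  assumes "0 < t0" "t0 \<le> \<tau>/2" "t0 < t" "t < \<tau>"
  shows "\<bar>h t0 t\<bar> \<le> M * \<psi> t"
  unfolding h_def M_def psi_eq
proof (rule alg3)
  show "0 \<le> a t0" "a t0 \<le> a t" "0 < a t" using anonneg amono_le apos assms by auto
  show "0 < s t" using s_pos assms by simp
  show "s t \<le> A" using s_le_A assms by simp
  show "0 < \<sigma>" by (rule sigma_pos)
  show "\<sigma> \<le> s t0" unfolding \<sigma>_def by (rule s_anti) (use assms in auto)
  show "s t0 * s t0 = A * A - a t0 * a t0" using s_sq[of t0] assms by (simp add: power2_eq_square)
  show "s t * s t = A * A - a t * a t" using s_sq[of t] assms by (simp add: power2_eq_square)
  show "\<bar>a'' t / (a' t)\<^sup>2 * a t\<bar> \<le> K" using ratio_abs assms by simp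
  show "A > 0" "a' \<tau> > 0" "a' t > 0" using Apos a'pos tau assms by auto
  show "a t \<le> (A / a' \<tau>) * a' t" using q_le assms by simp
qed

lemma h_cont: "0 \<le> t0 \<Longrightarrow> continuous_on {t0<..<\<tau>} (h t0)"
proof (intro continuous_at_imp_continuous_on ballI)
  fix t assume t0: "0 \<le> t0" and "t \<in> {t0<..<\<tau>}"
  then have t: "0 < t" "t < \<tau>" by auto
  have "s t \<noteq> 0" using s_pos[of t] t by linarith
  moreover have "a' t \<noteq> 0" using a'ne t by simp
  ultimately show "isCont (h t0) t" unfolding h_def
    by (intro continuous_intros isCont_a isCont_a' isCont_a'' isCont_s t) auto
qed

lemma h_int:
  assumes "0 < t0" "t0 \<le> \<tau>/2"
  shows "h t0 integrable_on {t0<..<\<tau>}"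
proof (rule integrable_by_bound[OF h_cont])
  have "\<psi> integrable_on {t0..\<tau>}" using psi_integral
    by (rule integrable_subinterval_real[OF has_integral_integrable]) (use assms in auto)
  then have "(\<lambda>t. M * \<psi> t) integrable_on {t0..\<tau>}" using integrable_cmul[of \<psi> _ M] by simp
  then show "(\<lambda>t. M * \<psi> t) integrable_on {t0<..<\<tau>}" using integrable_on_open_interval_real by blast
  fix x assume "x \<in> {t0<..<\<tau>}" then show "\<bar>h t0 x\<bar> \<le> M * \<psi> x" using h_bound assms by auto
qed (use assms in auto)

lemma J_seq:
  assumes X: "\<And>k. 0 < X k" "\<And>k. X k \<le> \<tau>/2" and lim: "X \<longlonglongrightarrow> 0"
  shows "h 0 integrable_on {0<..<\<tau>} \<and>
         (\<lambda>k. integral {X k..\<tau>} (h (X k))) \<longlonglongrightarrow> integral {0<..<\<tau>} (h 0)"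
proof -
  define fk where "fk k t = (if t \<in> {X k<..} then h (X k) t else 0)" for k t
  have setq: "\<And>k. {X k<..} \<inter> {0<..<\<tau>} = {X k<..<\<tau>}" using X by (auto intro: order.strict_trans[OF X(1)])
  have int: "fk k integrable_on {0<..<\<tau>}" for k
    unfolding fk_def integrable_restrict_Int setq using h_int X by auto
  have Mint: "(\<lambda>t. M * \<psi> t) integrable_on {0<..<\<tau>}" using integrable_cmul[OF psi_int_open, of M] by simp
  have bd: "norm (fk k t) \<le> M * \<psi> t" if "t \<in> {0<..<\<tau>}" for k t
  proof (cases "X k < t")
    case True then show ?thesis using h_bound X that by (auto simp: fk_def)
  next
    case False
    have "M \<ge> 0" unfolding M_def using K1 Apos sigma_pos a'pos[OF tau] by simp
    then show ?thesis using False psi_nonneg that by (auto simp: fk_def)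
  qed
  have pw: "(\<lambda>k. fk k t) \<longlonglongrightarrow> h 0 t" if t: "t \<in> {0<..<\<tau>}" for t
  proof -
    have ev: "\<forall>\<^sub>F k in sequentially. X k < t" using order_tendstoD(2)[OF lim, of t] t by auto
    have "(\<lambda>k. s (X k)) \<longlonglongrightarrow> s 0"
      using cont_s X lim unfolding continuous_on_sequentially comp_def
      by (meson atLeast_iff less_imp_le order_refl)
    moreover have "s t \<noteq> 0" using s_pos[of t] t by auto
    ultimately have "(\<lambda>k. h (X k) t) \<longlonglongrightarrow> h 0 t" unfolding h_def
      by (intro tendsto_mult_left tendsto_diff[OF _ tendsto_const] tendsto_divide[OF _ tendsto_const])
    then show ?thesis
      by (rule Lim_transform_eventually) (use ev in \<open>auto simp: fk_def elim: eventually_mono\<close>)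
  qed
  have c1: "h 0 integrable_on {0<..<\<tau>}"
    by (rule dominated_convergence(1)[OF int Mint bd pw])
  have c2: "(\<lambda>k. integral {0<..<\<tau>} (fk k)) \<longlonglongrightarrow> integral {0<..<\<tau>} (h 0)"
    by (rule dominated_convergence(2)[OF int Mint bd pw])
  have "integral {0<..<\<tau>} (fk k) = integral {X k..\<tau>} (h (X k))" for k
    unfolding fk_def integral_restrict_Int setq integral_open_interval_real ..
  then show ?thesis using c1 c2 by simp
qed

end



lemma alg4:
  fixes A d v \<alpha> p r :: real
  assumes "A > 0" "d > 0" "v > 0" "\<alpha> > 0" "p > 0" "v * v = A * A - \<alpha> * \<alpha>"
    "r * \<alpha> \<le> 1" "\<alpha> / d \<le> A / p"
  shows "A * d / (v * (A + v)) - p * (r * (A / v - 1)) \<ge> (A / v - 1) / \<alpha> * (A * d / \<alpha> - p)"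
    and "A * d / \<alpha> - p \<ge> 0" and "A / v - 1 > 0"
proof -
  have vA: "v < A"
  proof (rule ccontr)
    assume "\<not> v < A" then have "A * A \<le> v * v" using assms by (intro mult_mono) auto
    then show False using assms by (smt (verit) mult_pos_pos)
  qed
  show E: "A / v - 1 > 0" using vA assms by (simp add: field_simps)
  have id: "A * d / (v * (A + v)) = A * d * (A / v - 1) / (\<alpha> * \<alpha>)"
  proof -
    have aa: "\<alpha> * \<alpha> = (A - v) * (A + v)" using assms(6) by (simp add: algebra_simps)
    have "A * d * (A / v - 1) / (\<alpha> * \<alpha>) = A * d * ((A - v) / v) / ((A - v) * (A + v))"
      unfolding aa using assms by (simp add: field_simps)
    also have "\<dots> = (A * d * (A - v)) / ((v * (A + v)) * (A - v))" by (simp add: ac_simps)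
    also have "\<dots> = A * d / (v * (A + v))" using vA by (intro nonzero_mult_divide_mult_cancel_right) simp
    finally show ?thesis by simp
  qed
  have r: "r \<le> 1 / \<alpha>" using assms by (simp add: field_simps)
  have "p * (r * (A / v - 1)) \<le> p * ((1 / \<alpha>) * (A / v - 1))"
    using r E assms by (intro mult_left_mono mult_right_mono) auto
  then show "A * d / (v * (A + v)) - p * (r * (A / v - 1)) \<ge> (A / v - 1) / \<alpha> * (A * d / \<alpha> - p)"
  proof -
    have "(A/v-1)/\<alpha>*(A*d/\<alpha> - p) = A*d*(A/v-1)/(\<alpha>*\<alpha>) - p*((1/\<alpha>)*(A/v-1))"
      using assms(4) by (simp add: field_simps)
    then show ?thesis unfolding id using \<open>p * (r * (A / v - 1)) \<le> _\<close> by linarith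
  qed
  have "\<alpha> / d * p \<le> A" using assms by (simp add: field_simps)
  then show "A * d / \<alpha> - p \<ge> 0" using assms by (simp add: field_simps)
qed

context SSF begin

definition "J t0 = integral {t0..\<tau>} (h t0)"

lemma h0_int: "h 0 integrable_on {0<..<\<tau>}"
proof -
  define X where "X k = (\<tau>/2) * inverse (real (Suc k))" for k
  have "X \<longlonglongrightarrow> (\<tau>/2) * 0" unfolding X_def
    by (intro tendsto_mult tendsto_const LIMSEQ_inverse_real_of_nat)
  moreover have "0 < X k" "X k \<le> \<tau>/2" for k
    unfolding X_def using tau by (auto simp: field_simps)
  ultimately show ?thesis using J_seq[of X] by auto
qed

lemma J_lim: "(J \<longlongrightarrow> integral {0<..<\<tau>} (h 0)) (at_right 0)"
  unfolding tendsto_at_iff_sequentially comp_def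
proof (intro allI impI)
  fix X :: "nat \<Rightarrow> real" assume X: "\<forall>i. X i \<in> {0<..} - {0}" and lim: "X \<longlonglongrightarrow> 0"
  define Y where "Y i = min (X i) (\<tau>/2)" for i
  have "Y \<longlonglongrightarrow> min 0 (\<tau>/2)" unfolding Y_def by (intro tendsto_min lim tendsto_const)
  then have Yl: "Y \<longlonglongrightarrow> 0" using tau by simp
  have "0 < Y k" "Y k \<le> \<tau>/2" for k using X tau by (auto simp: Y_def)
  then have "(\<lambda>k. J (Y k)) \<longlonglongrightarrow> integral {0<..<\<tau>} (h 0)"
    using J_seq[of Y] Yl by (simp add: J_def)
  moreover have "\<forall>\<^sub>F k in sequentially. J (Y k) = J (X k)"
    using order_tendstoD(2)[OF lim, of "\<tau>/2"] tau
    by (auto simp: Y_def elim!: eventually_mono)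
  ultimately show "(\<lambda>k. J (X k)) \<longlonglongrightarrow> integral {0<..<\<tau>} (h 0)"
    by (rule Lim_transform_eventually)
qed

definition "W t = \<psi> t - a' \<tau> * h 0 t"

lemma h0_eq: "h 0 t = a'' t / (a' t)\<^sup>2 * (A / s t - 1)" unfolding h_def using s0 by simp

lemma W_bounds:
  assumes t: "0 < t" "t < \<tau>"
  shows "W t \<ge> 0" and "a t / a' t < A / a' \<tau> \<Longrightarrow> W t > 0"
proof -
  have st: "s t > 0" using s_pos t by simp
  have ss: "s t * s t = A * A - a t * a t" using s_sq[of t] t by (simp add: power2_eq_square)
  have rr: "a'' t / (a' t)\<^sup>2 * a t \<le> 1"
  proof -
    have "a'' t / (a' t)\<^sup>2 * a t = a t * a'' t / (a' t)\<^sup>2" by simp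
    then show ?thesis using ratio_le[of t] t by (metis mult.commute times_divide_eq_left)
  qed
  have qq: "a t / a' t \<le> A / a' \<tau>" using q_mono[of t \<tau>] t by simp
  note AL = alg4[of A "a' t" "s t" "a t" "a' \<tau>" "a'' t / (a' t)\<^sup>2",
      OF Apos a'pos[OF t(1)] st apos[OF t(1)] a'pos[OF tau] ss rr qq]
  have H: "(A / s t - 1) / a t * (A * a' t / a t - a' \<tau>) \<le> W t"
    "A * a' t / a t - a' \<tau> \<ge> 0" "A / s t - 1 > 0"
    using AL unfolding W_def psi_eq h0_eq by auto
  have at: "a t > 0" using apos t by simp
  show "W t \<ge> 0" using H at by (smt (verit) divide_pos_pos mult_nonneg_nonneg)
  assume lt: "a t / a' t < A / a' \<tau>"
  have "a t / a' t * a' \<tau> < A" using lt a'pos tau t by (simp add: field_simps)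
  then have "A * a' t / a t - a' \<tau> > 0" using at a'pos t by (simp add: field_simps)
  then show "W t > 0" using H at by (smt (verit) divide_pos_pos mult_pos_pos)
qed

lemma W_cont: "continuous_on {0<..<\<tau>} W"
proof (intro continuous_at_imp_continuous_on ballI)
  fix t assume "t \<in> {0<..<\<tau>}"
  then have t: "0 < t" "t < \<tau>" by auto
  have "s t \<noteq> 0" using s_pos[of t] t by linarith
  moreover have "A + s t \<noteq> 0" using s_pos[of t] t Apos by linarith
  moreover have "a' t \<noteq> 0" using a'ne t by simp
  ultimately show "isCont W t" unfolding W_def psi_eq h_def
    by (intro continuous_intros isCont_a isCont_a' isCont_a'' isCont_s t) auto
qed

lemma not_const_q: "\<exists>t\<in>{0<..<\<tau>}. a t / a' t < A / a' \<tau>"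
proof (rule ccontr)
  assume "\<not> ?thesis"
  then have eqk: "a t / a' t = A / a' \<tau>" if "0 < t" "t < \<tau>" for t
    using q_mono[of t \<tau>] that by force
  define k where "k = A / a' \<tau>"
  have k: "k > 0" unfolding k_def using Apos a'pos tau by simp
  define e where "e t = a t * exp (- t / k)" for t
  have de: "(e has_real_derivative 0) (at t)" if "0 < t" "t < \<tau>" for t
  proof -
    have "(e has_real_derivative a' t * exp (- t / k) + a t * (exp (- t / k) * (- 1 / k))) (at t)"
      unfolding e_def using da[OF that(1)] k
      by (auto intro!: derivative_eq_intros simp: field_simps)
    moreover have "a t = k * a' t" using eqk[OF that] a'pos[OF that(1)] unfolding k_def
      by (simp add: field_simps)
    ultimately show ?thesis using k by (simp add: field_simps)
  qed
  define E where "E = e (\<tau>/2)"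
  have E: "E > 0" unfolding E_def e_def using apos tau by simp
  have ge: "a x \<ge> E" if "0 < x" "x < \<tau>/2" for x
  proof -
    have "e (\<tau>/2) = e x"
    proof (rule DERIV_isconst2[of x "\<tau>/2" e])
      show "x < \<tau>/2" using that by simp
      show "continuous_on {x..\<tau>/2} e" unfolding e_def
        using that k by (intro continuous_at_imp_continuous_on ballI continuous_intros isCont_a) auto
      fix y assume "x < y" "y < \<tau>/2" then show "(e has_real_derivative 0) (at y)"
        using de that by simp
    qed (use that in auto)
    then have "a x * exp (- x / k) = E" unfolding E_def e_def by simp
    moreover have "exp (- x / k) \<le> 1" using that k by simp
    moreover have "a x \<ge> 0" using anonneg that by simp
    ultimately show ?thesis by (metis mult_left_le mult.commute)
  qed
  obtain d where d: "d > 0" and hd: "\<And>x. x \<in> {0..} \<Longrightarrow> dist x 0 < d \<Longrightarrow> dist (a x) (a 0) < E"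
    using cont_a E unfolding continuous_on_iff by (metis atLeast_iff order_refl)
  define x where "x = min (d/2) (\<tau>/4)"
  have x: "0 < x" "x < \<tau>/2" "x < d" using d tau by (auto simp: x_def min_def)
  have "a x < E" using hd[of x] x a0 anonneg[of x] by (auto simp: dist_real_def)
  then show False using ge[OF x(1,2)] by simp
qed

lemma B_pos: "1 - a' \<tau> * integral {0<..<\<tau>} (h 0) > 0"
proof -
  have Wint: "W integrable_on {0<..<\<tau>}" unfolding W_def
    by (intro integrable_diff psi_int_open integrable_cmul[OF h0_int, of "a' \<tau>", simplified])
  have "integral {0<..<\<tau>} W = 1 - a' \<tau> * integral {0<..<\<tau>} (h 0)"
    unfolding W_def
    using integral_diff[OF psi_int_open integrable_cmul[OF h0_int, of "a' \<tau>", simplified]]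
      psi_integral_open integral_mult_right by simp
  moreover obtain t1 where t1: "t1 \<in> {0<..<\<tau>}" "a t1 / a' t1 < A / a' \<tau>" using not_const_q by blast
  have "integral {0<..<\<tau>} W > 0"
    by (rule integral_pos_point[OF Wint W_cont _ t1(1)]) (use W_bounds t1 in auto)
  ultimately show ?thesis by simp
qed

end


theorem theorem4p2:
  fixes a a' a'' :: "real \<Rightarrow> real" and \<tau> :: real
  assumes "strongly_regular_scale_factor a a' a''"
    and "\<tau> > 0"
  defines "F \<equiv> (\<lambda>t. a'' t / (a' t)\<^sup>2 * (a \<tau> / sqrt ((a \<tau>)\<^sup>2 - (a t)\<^sup>2) - 1))"
  defines "L \<equiv> - (1 - a' \<tau> * integral {0..\<tau>} F)\<^sup>2"
  shows "F integrable_on {0..\<tau>} \<and>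
         ((\<lambda>\<rho>. g_tautau a a' a'' \<tau> \<rho>) \<longlongrightarrow> L) (at_left (fermi_radius a \<tau>)) \<and>
         0 < - L"
proof -
  from assms(1) obtain K where K1: "K \<ge> 1" and Kb: "\<forall>t>0. a t * a'' t / (a' t)\<^sup>2 \<ge> - K"
    and rg: "regular_scale_factor a a' a''"
    unfolding strongly_regular_scale_factor_def by blast
  interpret SSF a a' a'' \<tau> K
    by unfold_locales (use rg assms(2) K1 Kb in auto)
  have Fh: "F = h 0" unfolding F_def by (rule ext) (simp add: h0_eq)
  have Fint: "F integrable_on {0..\<tau>}" using h0_int Fh integrable_on_open_interval_real by auto
  have IF: "integral {0..\<tau>} F = integral {0<..<\<tau>} (h 0)"
    using Fh integral_open_interval_real by simp
  have g: "(\<lambda>\<rho>. g_tautau a a' a'' \<tau> \<rho>) = (\<lambda>\<rho>. - (1 - a' \<tau> * J (fermi_t0 a \<tau> \<rho>))\<^sup>2)"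
    unfolding g_tautau_def J_def h_def Let_def by simp
  have G: "((\<lambda>x. - (1 - a' \<tau> * J x)\<^sup>2) \<longlongrightarrow> L) (at_right 0)"
    unfolding L_def IF by (intro tendsto_intros J_lim)
  have lim: "((\<lambda>\<rho>. g_tautau a a' a'' \<tau> \<rho>) \<longlongrightarrow> L) (at_left (fermi_radius a \<tau>))"
    unfolding g R_0[symmetric] by (rule filterlim_compose[OF G t0_lim])
  have "0 < - L" unfolding L_def IF using B_pos by simp
  then show ?thesis using Fint lim by simp
qed

end
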